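(* For every $n\ge1$ (of either parity), the permutation representation of $S_n$ over $\mathbb{C}$ arising from the action of $S_n$ (by $\pi\cdot S=\pi(S)$) on the set of odd-sized subsets of $\{1,\dots,n\}$ does not unite conjugacy classes.
   Context: A representation $T$ of $G$ unites conjugacy classes if there are non-conjugate $\sigma,\tau\in G$ with $T(\sigma),T(\tau)$ similar matrices. *)

theory Defs
  imports "Jordan_Normal_Form.Matrix" "HOL-Combinatorics.Permutations"
begin

definition odd_subsets :: "nat \<Rightarrow> nat set set" where
  "odd_subsets n = {S. S \<subseteq> {1..n} \<and> odd (card S)}"

text \<open>A fixed enumeration of the odd-sized subsets (the choice does not affect
  the similarity class of the representation matrices).\<close>
definition odd_subsets_enum :: "nat \<Rightarrow> nat set list" where
  "odd_subsets_enum n = (SOME xs. distinct xs \<and> set xs = odd_subsets n)"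

definition odd_perm_rep :: "nat \<Rightarrow> (nat \<Rightarrow> nat) \<Rightarrow> complex mat" where
  "odd_perm_rep n \<sigma> =
     (let xs = odd_subsets_enum n; N = length xs
      in mat N N (\<lambda>(i, j). if \<sigma> ` (xs ! j) = xs ! i then 1 else 0))"

end

theory Submission
  imports Defs "HOL-Combinatorics.Cycles" "HOL-Combinatorics.Orbits" "HOL-Number_Theory.Totient"
begin

definition orb :: "('a \<Rightarrow> 'a) \<Rightarrow> 'a \<Rightarrow> 'a set" where
  "orb f x = range (\<lambda>i. (f ^^ i) x)"

lemma orb_lp:
  assumes "permutation \<sigma>"
  shows "orb \<sigma> x = (\<lambda>i. (\<sigma> ^^ i) x) ` {..<least_power \<sigma> x}"
proof -
  have "set (support \<sigma> x) = orb \<sigma> x" using support_set[OF assms] unfolding orb_def by simp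
  moreover have "set (support \<sigma> x) = (\<lambda>i. (\<sigma> ^^ i) x) ` {..<least_power \<sigma> x}"
    by (auto simp: atLeast_upt)
  ultimately show ?thesis by simp
qed

lemma card_orb:
  assumes "permutation \<sigma>"
  shows "card (orb \<sigma> x) = least_power \<sigma> x"
proof -
  have "set (support \<sigma> x) = orb \<sigma> x" using support_set[OF assms] unfolding orb_def by simp
  moreover have "distinct (support \<sigma> x)" using cycle_of_permutation[OF assms] .
  ultimately show ?thesis using distinct_card by fastforce
qed

lemma finite_orb: "permutation \<sigma> \<Longrightarrow> finite (orb \<sigma> x)"
  using orb_lp by (metis finite_imageI finite_lessThan)

lemma self_in_orb: "x \<in> orb \<sigma> x"
  unfolding orb_def by (metis funpow_0 rangeI)

lemma lp_pos: "permutation \<sigma> \<Longrightarrow> least_power \<sigma> x > 0"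
  by (rule least_power_of_permutation(2))

lemma funpow_eq_iff:
  assumes "permutation \<sigma>"
  shows "(\<sigma> ^^ i) x = (\<sigma> ^^ j) x \<longleftrightarrow> i mod least_power \<sigma> x = j mod least_power \<sigma> x"
proof -
  have gen: "(\<sigma> ^^ i) x = (\<sigma> ^^ j) x \<longleftrightarrow> i mod least_power \<sigma> x = j mod least_power \<sigma> x"
    if "i \<le> j" for i j
  proof -
    have inj: "inj (\<sigma> ^^ i)" using assms by (simp add: bij_is_inj permutation_funpow permutation_bijective)
    have "(\<sigma> ^^ j) x = (\<sigma> ^^ i) ((\<sigma> ^^ (j - i)) x)"
      using that by (metis funpow_add le_add_diff_inverse o_apply)
    hence "(\<sigma> ^^ i) x = (\<sigma> ^^ j) x \<longleftrightarrow> (\<sigma> ^^ (j - i)) x = x"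
      using inj by (metis injD)
    also have "\<dots> \<longleftrightarrow> least_power \<sigma> x dvd (j - i)" using least_power_dvd[OF assms] by simp
    also have "\<dots> \<longleftrightarrow> i mod least_power \<sigma> x = j mod least_power \<sigma> x"
      using mod_eq_dvd_iff_nat[OF that, of "least_power \<sigma> x"] by (simp add: eq_commute)
    finally show ?thesis .
  qed
  show ?thesis
  proof (cases "i \<le> j")
    case True then show ?thesis using gen by blast
  next
    case False then have "j \<le> i" by simp
    from gen[OF this] show ?thesis by (simp add: eq_commute)
  qed
qed

lemma funpow_mod_lp:
  assumes "permutation \<sigma>"
  shows "(\<sigma> ^^ (i mod least_power \<sigma> x)) x = (\<sigma> ^^ i) x"
  unfolding funpow_eq_iff[OF assms] by simp

lemma orb_trans:
  assumes "permutation \<sigma>" "y \<in> orb \<sigma> x"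
  shows "orb \<sigma> y = orb \<sigma> x"
proof -
  obtain i where y: "y = (\<sigma> ^^ i) x" using assms(2) unfolding orb_def by auto
  let ?l = "least_power \<sigma> x"
  have l: "?l > 0" using lp_pos[OF assms(1)] .
  show ?thesis
  proof
    show "orb \<sigma> y \<subseteq> orb \<sigma> x"
    proof
      fix z assume "z \<in> orb \<sigma> y"
      then obtain j where "z = (\<sigma> ^^ j) y" unfolding orb_def by auto
      then have "z = (\<sigma> ^^ (j + i)) x" by (simp add: y funpow_add)
      then show "z \<in> orb \<sigma> x" unfolding orb_def by blast
    qed
  next
    show "orb \<sigma> x \<subseteq> orb \<sigma> y"
    proof
      fix z assume "z \<in> orb \<sigma> x"
      then obtain j where z: "z = (\<sigma> ^^ j) x" unfolding orb_def by auto
      define m where "m = j + ?l * i - i"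
      have "i \<le> ?l * i" using l by simp
      hence mi: "m + i = j + ?l * i" unfolding m_def by linarith
      have "(\<sigma> ^^ m) y = (\<sigma> ^^ (m + i)) x" by (simp add: y funpow_add)
      also have "\<dots> = (\<sigma> ^^ j) x" unfolding mi funpow_eq_iff[OF assms(1)] by simp
      finally show "z \<in> orb \<sigma> y" unfolding orb_def z by (metis rangeI)
    qed
  qed
qed

lemma lp_orb:
  assumes "permutation \<sigma>" "y \<in> orb \<sigma> x"
  shows "least_power \<sigma> y = least_power \<sigma> x"
  using card_orb[OF assms(1)] orb_trans[OF assms] by metis

lemma orb_disj:
  assumes "permutation \<sigma>" "orb \<sigma> x \<inter> orb \<sigma> y \<noteq> {}"
  shows "orb \<sigma> x = orb \<sigma> y"
  using assms orb_trans by (metis disjoint_iff)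

lemma orb_subset_inv:
  assumes "\<sigma> ` S \<subseteq> S" "x \<in> S"
  shows "orb \<sigma> x \<subseteq> S"
proof -
  have "(\<sigma> ^^ i) x \<in> S" for i by (induction i) (use assms in auto)
  thus ?thesis unfolding orb_def by auto
qed

lemma orb_subset:
  assumes "\<sigma> permutes A" "x \<in> A"
  shows "orb \<sigma> x \<subseteq> A"
  using orb_subset_inv[of \<sigma> A x] assms permutes_image by blast

lemma image_orb:
  assumes "permutation \<sigma>"
  shows "\<sigma> ` orb \<sigma> x = orb \<sigma> x"
proof -
  have sub: "\<sigma> ` orb \<sigma> x \<subseteq> orb \<sigma> x"
  proof
    fix z assume "z \<in> \<sigma> ` orb \<sigma> x"
    then obtain i where "z = \<sigma> ((\<sigma> ^^ i) x)" unfolding orb_def by auto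
    then have "z = (\<sigma> ^^ Suc i) x" by simp
    then show "z \<in> orb \<sigma> x" unfolding orb_def by blast
  qed
  have "card (\<sigma> ` orb \<sigma> x) = card (orb \<sigma> x)"
  proof -
    have "inj \<sigma>" using assms permutation_bijective bij_is_inj by blast
    then show ?thesis by (simp add: card_image inj_on_subset)
  qed
  thus ?thesis using sub finite_orb[OF assms] by (simp add: card_subset_eq)
qed

lemma lp_pow_dvd_iff:
  fixes p k m :: nat
  assumes "p > 0"
  shows "p dvd k * m \<longleftrightarrow> p div gcd p k dvd m"
proof -
  define g where "g = gcd p k"
  have g0: "g > 0" using assms unfolding g_def by simp
  obtain d e where d: "p = g * d" and e: "k = g * e" unfolding g_def
    by (metis dvd_def gcd_dvd1 gcd_dvd2)
  have cop: "coprime d e"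
    using d e g0 unfolding g_def
    by (metis assms div_gcd_coprime dvd_triv_left gcd_nat.refl gr_implies_not0 nonzero_mult_div_cancel_left)
  have "p dvd k * m \<longleftrightarrow> d dvd e * m" using d e g0 by (simp add: mult.assoc)
  also have "\<dots> \<longleftrightarrow> d dvd m" using cop by (simp add: coprime_dvd_mult_right_iff)
  also have "d = p div g" using d g0 by simp
  also have "\<dots> = p div gcd p k" using g_def by simp
  finally show ?thesis .
qed

lemma lp_pow:
  assumes "permutation s"
  shows "least_power (s ^^ k) x = least_power s x div gcd (least_power s x) k"
proof -
  let ?p = "least_power s x"
  have ps: "permutation (s ^^ k)" using assms permutation_funpow by blast
  have key: "least_power (s ^^ k) x dvd m \<longleftrightarrow> ?p div gcd ?p k dvd m" for m
  proof -
    have "least_power (s ^^ k) x dvd m \<longleftrightarrow> ((s ^^ k) ^^ m) x = x" using least_power_dvd[OF ps] .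
    also have "\<dots> \<longleftrightarrow> (s ^^ (k * m)) x = x" by (simp add: funpow_mult)
    also have "\<dots> \<longleftrightarrow> ?p dvd k * m" using least_power_dvd[OF assms] by simp
    also have "\<dots> \<longleftrightarrow> ?p div gcd ?p k dvd m" using lp_pow_dvd_iff lp_pos[OF assms] by blast
    finally show ?thesis .
  qed
  show ?thesis using key[of "least_power (s ^^ k) x"] key[of "?p div gcd ?p k"] by (simp add: dvd_antisym)
qed

definition Orbs :: "('a \<Rightarrow> 'a) \<Rightarrow> 'a set \<Rightarrow> 'a set set" where
  "Orbs \<sigma> A = orb \<sigma> ` A"

definition inv_sets :: "('a \<Rightarrow> 'a) \<Rightarrow> 'a set \<Rightarrow> 'a set set" where
  "inv_sets \<sigma> A = {S. S \<subseteq> A \<and> \<sigma> ` S = S}"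

lemma permutes_permutation': "\<sigma> permutes A \<Longrightarrow> finite A \<Longrightarrow> permutation \<sigma>"
  unfolding permutation_permutes by blast

lemma inv_sets_Union:
  assumes "\<sigma> permutes A" "finite A"
  shows "inv_sets \<sigma> A = Union ` Pow (Orbs \<sigma> A)"
proof
  have p: "permutation \<sigma>" using assms permutes_permutation' by blast
  show "inv_sets \<sigma> A \<subseteq> Union ` Pow (Orbs \<sigma> A)"
  proof
    fix S assume "S \<in> inv_sets \<sigma> A"
    hence S: "S \<subseteq> A" "\<sigma> ` S = S" unfolding inv_sets_def by auto
    have "S = \<Union> (orb \<sigma> ` S)"
    proof
      show "S \<subseteq> \<Union> (orb \<sigma> ` S)" using self_in_orb by fast
      show "\<Union> (orb \<sigma> ` S) \<subseteq> S" using orb_subset_inv[of \<sigma> S] S(2) by auto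
    qed
    moreover have "orb \<sigma> ` S \<in> Pow (Orbs \<sigma> A)" using S(1) unfolding Orbs_def by auto
    ultimately show "S \<in> Union ` Pow (Orbs \<sigma> A)" by blast
  qed
  show "Union ` Pow (Orbs \<sigma> A) \<subseteq> inv_sets \<sigma> A"
  proof
    fix S assume "S \<in> Union ` Pow (Orbs \<sigma> A)"
    then obtain B where B: "B \<subseteq> Orbs \<sigma> A" "S = \<Union>B" by auto
    have "S \<subseteq> A" using B orb_subset[OF assms(1)] unfolding Orbs_def by auto
    moreover have "\<sigma> ` S = S"
    proof -
      have "\<forall>b\<in>B. \<sigma> ` b = b" using B(1) image_orb[OF p] unfolding Orbs_def by auto
      then show ?thesis unfolding B(2) image_Union by simp
    qed
    ultimately show "S \<in> inv_sets \<sigma> A" unfolding inv_sets_def by blast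
  qed
qed

lemma Orbs_inj_Union:
  assumes "\<sigma> permutes A" "finite A"
  shows "inj_on Union (Pow (Orbs \<sigma> A))"
proof -
  have p: "permutation \<sigma>" using assms permutes_permutation' by blast
  have key: "b \<in> B2" if h: "B1 \<subseteq> Orbs \<sigma> A" "B2 \<subseteq> Orbs \<sigma> A" "\<Union>B1 = \<Union>B2" "b \<in> B1" for B1 B2 b
  proof -
    obtain x where x: "b = orb \<sigma> x" using h(1,4) unfolding Orbs_def by auto
    have "x \<in> \<Union>B2" using h(3,4) x self_in_orb by fast
    then obtain b' where b': "b' \<in> B2" "x \<in> b'" by auto
    obtain y where y: "b' = orb \<sigma> y" using b' h(2) unfolding Orbs_def by auto
    have "orb \<sigma> x = orb \<sigma> y" using orb_trans[OF p] b'(2) y by simp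
    thus ?thesis using x y b' by simp
  qed
  show ?thesis unfolding inj_on_def
  proof (intro ballI impI)
    fix B1 B2 assume "B1 \<in> Pow (Orbs \<sigma> A)" "B2 \<in> Pow (Orbs \<sigma> A)" "\<Union>B1 = \<Union>B2"
    thus "B1 = B2" using key[of B1 B2] key[of B2 B1] by auto
  qed
qed

lemma finite_Orbs: "finite A \<Longrightarrow> finite (Orbs \<sigma> A)"
  unfolding Orbs_def by simp

lemma card_inv_sets:
  assumes "\<sigma> permutes A" "finite A"
  shows "card (inv_sets \<sigma> A) = 2 ^ card (Orbs \<sigma> A)"
  unfolding inv_sets_Union[OF assms] card_image[OF Orbs_inj_Union[OF assms]]
  using card_Pow finite_Orbs[OF assms(2)] by blast

lemma card_Orbs_sum:
  assumes "\<sigma> permutes A" "finite A"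
  shows "real (card (Orbs \<sigma> A)) = (\<Sum>x\<in>A. 1 / real (least_power \<sigma> x))"
proof -
  have p: "permutation \<sigma>" using assms permutes_permutation' by blast
  have "(\<Sum>x\<in>A. 1 / real (least_power \<sigma> x))
      = (\<Sum>y\<in>orb \<sigma> ` A. \<Sum>x\<in>{x\<in>A. orb \<sigma> x = y}. 1 / real (least_power \<sigma> x))"
    using sum.image_gen[OF assms(2)] by blast
  also have "\<dots> = (\<Sum>y\<in>orb \<sigma> ` A. 1)"
  proof (rule sum.cong[OF refl])
    fix y assume "y \<in> orb \<sigma> ` A"
    then obtain z where z: "z \<in> A" "y = orb \<sigma> z" by auto
    have set: "{x\<in>A. orb \<sigma> x = y} = y"
    proof
      show "{x\<in>A. orb \<sigma> x = y} \<subseteq> y" using self_in_orb by fast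
      show "y \<subseteq> {x\<in>A. orb \<sigma> x = y}"
        using z orb_subset[OF assms(1) z(1)] orb_trans[OF p] by auto
    qed
    have lp: "least_power \<sigma> x = card y" if "x \<in> y" for x
      using z that lp_orb[OF p] card_orb[OF p] by metis
    have cy: "card y > 0" using z card_orb[OF p] lp_pos[OF p] by simp
    have "(\<Sum>x\<in>{x\<in>A. orb \<sigma> x = y}. 1 / real (least_power \<sigma> x)) = (\<Sum>x\<in>y. 1 / real (card y))"
      unfolding set using lp by simp
    also have "\<dots> = 1" using cy by simp
    finally show "(\<Sum>x\<in>{x\<in>A. orb \<sigma> x = y}. 1 / real (least_power \<sigma> x)) = 1" .
  qed
  also have "\<dots> = real (card (Orbs \<sigma> A))" unfolding Orbs_def by simp
  finally show ?thesis by simp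
qed

definition Fc :: "('a \<Rightarrow> 'a) \<Rightarrow> 'a set \<Rightarrow> nat" where
  "Fc \<sigma> A = card {S \<in> inv_sets \<sigma> A. odd (card S)}"

lemma Fc_zero:
  assumes "\<sigma> permutes A" "finite A" "\<forall>x\<in>A. even (least_power \<sigma> x)"
  shows "Fc \<sigma> A = 0"
proof -
  have p: "permutation \<sigma>" using assms permutes_permutation' by blast
  have "even (card S)" if hS: "S \<in> inv_sets \<sigma> A" for S
  proof -
    obtain B where B: "B \<subseteq> Orbs \<sigma> A" "S = \<Union>B" using hS inv_sets_Union[OF assms(1,2)] by auto
    have fin: "finite B" using B(1) finite_Orbs[OF assms(2)] finite_subset by blast
    have finb: "\<forall>b\<in>B. finite b" using B(1) finite_orb[OF p] unfolding Orbs_def by auto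
    have disj: "\<forall>b1\<in>B. \<forall>b2\<in>B. b1 \<noteq> b2 \<longrightarrow> b1 \<inter> b2 = {}"
      using B(1) orb_disj[OF p] unfolding Orbs_def by blast
    have "card S = (\<Sum>b\<in>B. card b)" unfolding B(2) using card_Union_disjoint[of B] fin finb disj
      by (simp add: pairwise_def disjnt_def)
    moreover have "\<forall>b\<in>B. even (card b)"
      using B(1) assms(3) card_orb[OF p] unfolding Orbs_def by auto
    ultimately show ?thesis by (simp add: dvd_sum)
  qed
  hence "{S \<in> inv_sets \<sigma> A. odd (card S)} = {}" by auto
  thus ?thesis unfolding Fc_def by (simp only: card.empty)
qed

lemma Fc_odd:
  assumes "\<sigma> permutes A" "finite A" "x0 \<in> A" "odd (least_power \<sigma> x0)"
  shows "2 * Fc \<sigma> A = 2 ^ card (Orbs \<sigma> A)"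
proof -
  have p: "permutation \<sigma>" using assms permutes_permutation' by blast
  have inj: "inj \<sigma>" using p permutation_bijective bij_is_inj by blast
  define Ob where "Ob = orb \<sigma> x0"
  have Osub: "Ob \<subseteq> A" unfolding Ob_def using orb_subset[OF assms(1,3)] .
  have Oinv: "\<sigma> ` Ob = Ob" unfolding Ob_def using image_orb[OF p] .
  have Oodd: "odd (card Ob)" unfolding Ob_def card_orb[OF p] using assms(4) .
  have finO: "finite Ob" using Osub assms(2) finite_subset by blast
  define T where "T S = (S - Ob) \<union> (Ob - S)" for S
  have TT: "T (T S) = S" for S unfolding T_def by auto
  have Tinv: "T S \<in> inv_sets \<sigma> A" if "S \<in> inv_sets \<sigma> A" for S
  proof -
    have S: "S \<subseteq> A" "\<sigma> ` S = S" using that unfolding inv_sets_def by auto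
    have "\<sigma> ` T S = (\<sigma> ` S - \<sigma> ` Ob) \<union> (\<sigma> ` Ob - \<sigma> ` S)"
      unfolding T_def image_Un image_set_diff[OF inj] ..
    also have "\<dots> = T S" unfolding S(2) Oinv T_def ..
    finally show ?thesis using S(1) Osub unfolding inv_sets_def T_def by auto
  qed
  have Tpar: "odd (card (T S)) \<longleftrightarrow> even (card S)" if "S \<in> inv_sets \<sigma> A" for S
  proof -
    have finS: "finite S" using that assms(2) finite_subset unfolding inv_sets_def by blast
    have c1: "card (T S) = card (S - Ob) + card (Ob - S)"
      unfolding T_def by (rule card_Un_disjoint) (use finS finO in auto)
    have c2: "card S = card (S - Ob) + card (S \<inter> Ob)"
    proof -
      have "card S = card ((S - Ob) \<union> (S \<inter> Ob))" by (metis Un_Diff_Int)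
      also have "\<dots> = card (S - Ob) + card (S \<inter> Ob)"
        by (rule card_Un_disjoint) (use finS in auto)
      finally show ?thesis .
    qed
    have c3: "card Ob = card (Ob - S) + card (S \<inter> Ob)"
    proof -
      have "card Ob = card ((Ob - S) \<union> (S \<inter> Ob))" by (metis Un_Diff_Int Int_commute)
      also have "\<dots> = card (Ob - S) + card (S \<inter> Ob)"
        by (rule card_Un_disjoint) (use finO in auto)
      finally show ?thesis .
    qed
    show ?thesis using c1 c2 c3 Oodd by presburger
  qed
  let ?I = "inv_sets \<sigma> A"
  let ?Od = "{S \<in> ?I. odd (card S)}" and ?Ev = "{S \<in> ?I. even (card S)}"
  have finI: "finite ?I" unfolding inv_sets_def using assms(2) by simp
  have injT: "inj_on T X" for X by (metis TT inj_on_inverseI)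
  have "card ?Od \<le> card ?Ev"
    by (rule card_inj_on_le[OF injT]) (use Tinv Tpar finI in auto)
  moreover have "card ?Ev \<le> card ?Od"
    by (rule card_inj_on_le[OF injT]) (use Tinv Tpar finI in auto)
  ultimately have eq: "card ?Od = card ?Ev" by simp
  have "card ?I = card ?Od + card ?Ev"
  proof -
    have "?I = ?Od \<union> ?Ev" by auto
    moreover have "?Od \<inter> ?Ev = {}" by auto
    ultimately show ?thesis using finI by (metis (no_types, lifting) card_Un_disjoint finite_Un)
  qed
  thus ?thesis using eq card_inv_sets[OF assms(1,2)] unfolding Fc_def by simp
qed

definition Hs :: "('a \<Rightarrow> nat) \<Rightarrow> 'a set \<Rightarrow> nat \<Rightarrow> real" where
  "Hs p A d = (\<Sum>x\<in>A. if d dvd p x then 1 / real (p x) else 0)"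

definition Gs :: "('a \<Rightarrow> nat) \<Rightarrow> 'a set \<Rightarrow> nat \<Rightarrow> real" where
  "Gs p A k = (\<Sum>x\<in>A. real (gcd (p x) k) / real (p x))"

lemma gcd_as_sum:
  fixes a k :: nat
  assumes "k > 0"
  shows "real (gcd a k) = (\<Sum>d\<in>{d. d dvd k}. if d dvd a then real (totient d) else 0)"
proof -
  have fin: "finite {d. d dvd k}" using assms by simp
  have "gcd a k = (\<Sum>d | d dvd gcd a k. totient d)" by (rule totient_divisor_sum[symmetric])
  also have "{d. d dvd gcd a k} = {d \<in> {d. d dvd k}. d dvd a}" by auto
  also have "(\<Sum>d\<in>{d \<in> {d. d dvd k}. d dvd a}. totient d) = (\<Sum>d\<in>{d. d dvd k}. if d dvd a then totient d else 0)"
    using sum.inter_filter[OF fin] by simp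
  finally have "real (gcd a k) = real (\<Sum>d\<in>{d. d dvd k}. if d dvd a then totient d else 0)" by simp
  also have "\<dots> = (\<Sum>d\<in>{d. d dvd k}. if d dvd a then real (totient d) else 0)"
    unfolding of_nat_sum by (intro sum.cong refl) simp
  finally show ?thesis .
qed

lemma G_H:
  assumes "finite A" "k > 0"
  shows "Gs p A k = (\<Sum>d\<in>{d. d dvd k}. real (totient d) * Hs p A d)"
proof -
  have "Gs p A k = (\<Sum>x\<in>A. \<Sum>d\<in>{d. d dvd k}. if d dvd p x then real (totient d) / real (p x) else 0)"
    unfolding Gs_def gcd_as_sum[OF assms(2)] sum_divide_distrib by (intro sum.cong refl) simp
  also have "\<dots> = (\<Sum>d\<in>{d. d dvd k}. \<Sum>x\<in>A. if d dvd p x then real (totient d) / real (p x) else 0)"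
    by (rule sum.swap)
  also have "\<dots> = (\<Sum>d\<in>{d. d dvd k}. real (totient d) * Hs p A d)"
    unfolding Hs_def sum_distrib_left by (intro sum.cong refl) (simp add: divide_inverse)
  finally show ?thesis .
qed

lemma G_eq_H_eq:
  assumes "finite A" "finite B" "\<forall>k>0. Gs p A k = Gs q B k"
  shows "\<forall>k>0. Hs p A k = Hs q B k"
proof -
  have "Hs p A k = Hs q B k" if "k > 0" for k
    using that
  proof (induction k rule: less_induct)
    case (less k)
    have fin: "finite {d. d dvd k}" using less.prems by simp
    have split: "{d. d dvd k} = insert k ({d. d dvd k} - {k})" by auto
    have rest: "(\<Sum>d\<in>{d. d dvd k} - {k}. real (totient d) * Hs p A d)
             = (\<Sum>d\<in>{d. d dvd k} - {k}. real (totient d) * Hs q B d)"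
    proof (rule sum.cong[OF refl])
      fix d assume d: "d \<in> {d. d dvd k} - {k}"
      hence "d < k" "d > 0" using less.prems by (auto intro: dvd_imp_le nat_neq_iff[THEN iffD1] dest: dvd_imp_le)
      thus "real (totient d) * Hs p A d = real (totient d) * Hs q B d" using less.IH by simp
    qed
    have "Gs p A k = real (totient k) * Hs p A k + (\<Sum>d\<in>{d. d dvd k} - {k}. real (totient d) * Hs p A d)"
      unfolding G_H[OF assms(1) less.prems] by (subst split, subst sum.insert) (use fin in auto)
    moreover have "Gs q B k = real (totient k) * Hs q B k + (\<Sum>d\<in>{d. d dvd k} - {k}. real (totient d) * Hs q B d)"
      unfolding G_H[OF assms(2) less.prems] by (subst split, subst sum.insert) (use fin in auto)
    moreover have "totient k > 0" using less.prems by simp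
    ultimately show ?case using assms(3) less.prems rest by simp
  qed
  thus ?thesis by blast
qed

lemma Hs_split:
  assumes "finite A"
  shows "Hs p A d = Hs p {x\<in>A. p x \<noteq> m} d + Hs p {x\<in>A. p x = m} d"
proof -
  have "A = {x\<in>A. p x \<noteq> m} \<union> {x\<in>A. p x = m}" by auto
  moreover have "{x\<in>A. p x \<noteq> m} \<inter> {x\<in>A. p x = m} = {}" by auto
  ultimately show ?thesis unfolding Hs_def using assms
    by (metis (no_types, lifting) finite_Un sum.union_disjoint)
qed

lemma Hs_const:
  assumes "finite A"
  shows "Hs p {x\<in>A. p x = m} d = real (card {x\<in>A. p x = m}) * (if d dvd m then 1 / real m else 0)"
proof -
  have "Hs p {x\<in>A. p x = m} d = (\<Sum>x\<in>{x\<in>A. p x = m}. if d dvd m then 1 / real m else 0)"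
    unfolding Hs_def by (intro sum.cong refl) auto
  also have "\<dots> = real (card {x\<in>A. p x = m}) * (if d dvd m then 1 / real m else 0)" by simp
  finally show ?thesis .
qed

lemma H_count:
  fixes p q :: "'a \<Rightarrow> nat"
  assumes "finite A" "finite B" "\<forall>x\<in>A. p x > 0" "\<forall>y\<in>B. q y > 0" "\<forall>d>0. Hs p A d = Hs q B d"
  shows "card {x\<in>A. p x = j} = card {y\<in>B. q y = j}"
  using assms
proof (induction "card A + card B" arbitrary: A B rule: less_induct)
  case less
  show ?case
  proof (cases "A = {} \<and> B = {}")
    case True then show ?thesis by simp
  next
    case False
    define V where "V = p ` A \<union> q ` B"
    have finV: "finite V" "V \<noteq> {}" unfolding V_def using less.prems False by auto
    define m where "m = Max V"
    have mV: "m \<in> V" unfolding m_def using finV Max_in by blast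
    have leV: "v \<le> m" if "v \<in> V" for v unfolding m_def using finV that by simp
    have mpos: "m > 0" using mV less.prems unfolding V_def by auto
    have HA: "Hs p A m = real (card {x\<in>A. p x = m}) * (1 / real m)"
    proof -
      have "Hs p A m = (\<Sum>x\<in>A. if p x = m then 1 / real m else 0)"
        unfolding Hs_def
      proof (intro sum.cong refl)
        fix x assume x: "x \<in> A"
        have "p x \<le> m" using leV x unfolding V_def by auto
        moreover have "p x > 0" using x less.prems by auto
        ultimately have "m dvd p x \<longleftrightarrow> p x = m" by (auto dest: dvd_imp_le)
        thus "(if m dvd p x then 1 / real (p x) else 0) = (if p x = m then 1 / real m else 0)" by auto
      qed
      also have "\<dots> = (\<Sum>x\<in>{x\<in>A. p x = m}. 1 / real m)"
        using sum.inter_filter[OF less.prems(1), of "\<lambda>x. 1 / real m" "\<lambda>x. p x = m"] by simp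
      finally show ?thesis by simp
    qed
    have HB: "Hs q B m = real (card {x\<in>B. q x = m}) * (1 / real m)"
    proof -
      have "Hs q B m = (\<Sum>x\<in>B. if q x = m then 1 / real m else 0)"
        unfolding Hs_def
      proof (intro sum.cong refl)
        fix x assume x: "x \<in> B"
        have "q x \<le> m" using leV x unfolding V_def by auto
        moreover have "q x > 0" using x less.prems by auto
        ultimately have "m dvd q x \<longleftrightarrow> q x = m" by (auto dest: dvd_imp_le)
        thus "(if m dvd q x then 1 / real (q x) else 0) = (if q x = m then 1 / real m else 0)" by auto
      qed
      also have "\<dots> = (\<Sum>x\<in>{x\<in>B. q x = m}. 1 / real m)"
        using sum.inter_filter[OF less.prems(2), of "\<lambda>x. 1 / real m" "\<lambda>x. q x = m"] by simp
      finally show ?thesis by simp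
    qed
    have cm: "card {x\<in>A. p x = m} = card {x\<in>B. q x = m}"
      using HA HB less.prems(5) mpos by simp
    define A' where "A' = {x\<in>A. p x \<noteq> m}"
    define B' where "B' = {x\<in>B. q x \<noteq> m}"
    have H': "\<forall>d>0. Hs p A' d = Hs q B' d"
    proof (intro allI impI)
      fix d :: nat assume d: "d > 0"
      have "Hs p A d = Hs p A' d + Hs p {x\<in>A. p x = m} d" unfolding A'_def using Hs_split[OF less.prems(1)] .
      moreover have "Hs q B d = Hs q B' d + Hs q {x\<in>B. q x = m} d" unfolding B'_def using Hs_split[OF less.prems(2)] .
      ultimately show "Hs p A' d = Hs q B' d"
        using less.prems(5) d Hs_const[OF less.prems(1)] Hs_const[OF less.prems(2)] cm by simp
    qed
    have nonempty: "{x\<in>A. p x = m} \<noteq> {} \<and> {x\<in>B. q x = m} \<noteq> {}"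
    proof -
      have "{x\<in>A. p x = m} \<noteq> {} \<or> {x\<in>B. q x = m} \<noteq> {}" using mV unfolding V_def by auto
      moreover have "finite {x\<in>A. p x = m}" "finite {x\<in>B. q x = m}" using less.prems by auto
      ultimately show ?thesis using cm by (metis card_0_eq)
    qed
    have cA: "card A' < card A" unfolding A'_def using nonempty less.prems(1)
      by (intro psubset_card_mono) auto
    have cB: "card B' < card B" unfolding B'_def using nonempty less.prems(2)
      by (intro psubset_card_mono) auto
    have IH: "card {x\<in>A'. p x = j} = card {y\<in>B'. q y = j}"
      using less.hyps[of A' B'] cA cB H' less.prems unfolding A'_def B'_def by auto
    show ?thesis
    proof (cases "j = m")
      case True then show ?thesis using cm by simp
    next
      case False
      hence "{x\<in>A'. p x = j} = {x\<in>A. p x = j}" "{y\<in>B'. q y = j} = {y\<in>B. q y = j}"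
        unfolding A'_def B'_def by auto
      then show ?thesis using IH by simp
    qed
  qed
qed

lemma orb_eq_orbit: "permutation \<sigma> \<Longrightarrow> orbit \<sigma> x = orb \<sigma> x"
  unfolding orb_def by (subst orbit_altdef_permutation) auto

lemma cyclic_orb: "permutation \<sigma> \<Longrightarrow> cyclic_on \<sigma> (orb \<sigma> x)"
  using cyclic_on_orbit' orb_eq_orbit by metis

lemma restrict_funpow:
  assumes "\<sigma> permutes A" "finite A" "x \<in> A" "z \<in> A - orb \<sigma> x"
  shows "(perm_restrict \<sigma> (A - orb \<sigma> x) ^^ i) z = (\<sigma> ^^ i) z"
proof (induction i)
  case 0 then show ?case by simp
next
  case (Suc i)
  have p: "permutation \<sigma>" using assms(1,2) permutation_permutes by blast
  have zin: "(\<sigma> ^^ i) z \<in> orb \<sigma> z" unfolding orb_def by blast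
  have "orb \<sigma> z \<subseteq> A" using orb_subset[OF assms(1)] assms(4) by blast
  moreover have "orb \<sigma> z \<inter> orb \<sigma> x = {}"
  proof (rule ccontr)
    assume "orb \<sigma> z \<inter> orb \<sigma> x \<noteq> {}"
    hence "orb \<sigma> z = orb \<sigma> x" using orb_disj[OF p] by blast
    thus False using assms(4) self_in_orb[of z \<sigma>] by auto
  qed
  ultimately have "(\<sigma> ^^ i) z \<in> A - orb \<sigma> x" using zin by blast
  then show ?case using Suc by (simp add: perm_restrict_simps)
qed

lemma restrict_lp:
  assumes "\<sigma> permutes A" "finite A" "x \<in> A" "z \<in> A - orb \<sigma> x"
  shows "least_power (perm_restrict \<sigma> (A - orb \<sigma> x)) z = least_power \<sigma> z"
  unfolding least_power_def restrict_funpow[OF assms] ..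

lemma restrict_counts:
  assumes "\<sigma> permutes A" "finite A" "x \<in> A"
  shows "card {z\<in>A - orb \<sigma> x. least_power (perm_restrict \<sigma> (A - orb \<sigma> x)) z = j}
       = card {z\<in>A. least_power \<sigma> z = j} - (if j = least_power \<sigma> x then least_power \<sigma> x else 0)"
proof -
  have p: "permutation \<sigma>" using assms(1,2) permutation_permutes by blast
  have Osub: "orb \<sigma> x \<subseteq> A" using orb_subset[OF assms(1,3)] .
  have eq: "{z\<in>A - orb \<sigma> x. least_power (perm_restrict \<sigma> (A - orb \<sigma> x)) z = j}
      = {z\<in>A. least_power \<sigma> z = j} - orb \<sigma> x"
    using restrict_lp[OF assms] by auto
  show ?thesis
  proof (cases "j = least_power \<sigma> x")
    case True
    have "orb \<sigma> x \<subseteq> {z\<in>A. least_power \<sigma> z = j}" using Osub lp_orb[OF p] True by auto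
    hence "card ({z\<in>A. least_power \<sigma> z = j} - orb \<sigma> x) = card {z\<in>A. least_power \<sigma> z = j} - card (orb \<sigma> x)"
      using assms(2) by (simp add: card_Diff_subset finite_orb[OF p])
    then show ?thesis unfolding eq using True card_orb[OF p] by simp
  next
    case False
    have "{z\<in>A. least_power \<sigma> z = j} - orb \<sigma> x = {z\<in>A. least_power \<sigma> z = j}"
      using lp_orb[OF p] False by auto
    then show ?thesis unfolding eq using False by simp
  qed
qed

lemma conj_exists:
  assumes "finite A" "finite B" "s permutes A" "t permutes B"
    "\<forall>j. card {x\<in>A. least_power s x = j} = card {y\<in>B. least_power t y = j}"
  shows "\<exists>f. bij_betw f A B \<and> (\<forall>x\<in>A. f (s x) = t (f x))"
  using assms
proof (induction "card A" arbitrary: A B s t rule: less_induct)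
  case less
  show ?case
  proof (cases "A = {}")
    case True
    have "B = {}"
    proof (rule ccontr)
      assume "B \<noteq> {}"
      then obtain y where y: "y \<in> B" by auto
      have "card {y'\<in>B. least_power t y' = least_power t y} > 0"
        using y less.prems(2) by (auto simp: card_gt_0_iff)
      thus False using less.prems(5)[rule_format, of "least_power t y"] True by simp
    qed
    then show ?thesis using True by (auto simp: bij_betw_def)
  next
    case False
    then obtain x where x: "x \<in> A" by auto
    have ps: "permutation s" using less.prems(1,3) permutation_permutes by blast
    have pt: "permutation t" using less.prems(2,4) permutation_permutes by blast
    define j where "j = least_power s x"
    have "card {x'\<in>A. least_power s x' = j} > 0"
      using x less.prems(1) unfolding j_def by (auto simp: card_gt_0_iff)
    hence "card {y\<in>B. least_power t y = j} > 0"
      using less.prems(5) by simp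
    then obtain y where y: "y \<in> B" "least_power t y = j" by (auto simp: card_gt_0_iff)
    define Ox where "Ox = orb s x"
    define Oy where "Oy = orb t y"
    define A' where "A' = A - Ox"
    define B' where "B' = B - Oy"
    define s' where "s' = perm_restrict s A'"
    define t' where "t' = perm_restrict t B'"
    have s'p: "s' permutes A'" unfolding s'_def A'_def Ox_def
      by (rule perm_restrict_diff_cyclic[OF less.prems(3) cyclic_orb[OF ps]])
    have t'p: "t' permutes B'" unfolding t'_def B'_def Oy_def
      by (rule perm_restrict_diff_cyclic[OF less.prems(4) cyclic_orb[OF pt]])
    have cnt: "\<forall>j'. card {z\<in>A'. least_power s' z = j'} = card {z\<in>B'. least_power t' z = j'}"
      unfolding s'_def t'_def A'_def B'_def Ox_def Oy_def
        restrict_counts[OF less.prems(3,1) x] restrict_counts[OF less.prems(4,2) y(1)]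
      using less.prems(5) y(2) j_def by simp
    have OxA: "Ox \<subseteq> A" unfolding Ox_def using orb_subset[OF less.prems(3) x] .
    have OyB: "Oy \<subseteq> B" unfolding Oy_def using orb_subset[OF less.prems(4) y(1)] .
    have "card A' < card A" unfolding A'_def using OxA self_in_orb[of x s] less.prems(1) Ox_def
      by (intro psubset_card_mono) auto
    then obtain f' where f': "bij_betw f' A' B'" "\<forall>z\<in>A'. f' (s' z) = t' (f' z)"
      using less.hyps[of A' B' s' t'] less.prems(1,2) s'p t'p cnt unfolding A'_def B'_def by auto
    define g where "g z = (LEAST i. (s ^^ i) x = z)" for z
    define f where "f z = (if z \<in> Ox then (t ^^ g z) y else f' z)" for z
    have fpow: "f ((s ^^ i) x) = (t ^^ i) y" for i
    proof -
      let ?z = "(s ^^ i) x"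
      have zin: "?z \<in> Ox" unfolding Ox_def orb_def by blast
      have "(s ^^ g ?z) x = ?z" unfolding g_def by (rule LeastI[of _ i]) simp
      hence "g ?z mod j = i mod j" using funpow_eq_iff[OF ps] j_def by simp
      hence "(t ^^ g ?z) y = (t ^^ i) y" using funpow_eq_iff[OF pt] y(2) by simp
      thus ?thesis unfolding f_def using zin by simp
    qed
    have comm: "f (s z) = t (f z)" if z: "z \<in> A" for z
    proof (cases "z \<in> Ox")
      case True
      then obtain i where i: "z = (s ^^ i) x" unfolding Ox_def orb_def by auto
      have "f (s z) = f ((s ^^ Suc i) x)" using i by simp
      also have "\<dots> = (t ^^ Suc i) y" by (rule fpow)
      also have "\<dots> = t (f z)" using fpow i by simp
      finally show ?thesis .
    next
      case False
      hence zA': "z \<in> A'" unfolding A'_def using z by simp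
      have "s' z = s z" unfolding s'_def using zA' by (simp add: perm_restrict_simps)
      moreover have "s' z \<in> A'" using permutes_in_image[OF s'p] zA' by simp
      ultimately have szA': "s z \<in> A'" by simp
      have "f' z \<in> B'" using bij_betwE[OF f'(1)] zA' by simp
      hence "t' (f' z) = t (f' z)" unfolding t'_def by (simp add: perm_restrict_simps)
      moreover have "f (s z) = f' (s z)" unfolding f_def using szA' A'_def by simp
      moreover have "f z = f' z" unfolding f_def using False by simp
      moreover have "f' (s' z) = t' (f' z)" using f'(2) zA' by simp
      ultimately show ?thesis using \<open>s' z = s z\<close> by simp
    qed
    have bijO: "bij_betw f Ox Oy"
    proof (rule bij_betw_imageI)
      show "inj_on f Ox"
      proof (rule inj_onI)
        fix z1 z2 assume "z1 \<in> Ox" "z2 \<in> Ox" "f z1 = f z2"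
        then obtain i1 i2 where i: "z1 = (s ^^ i1) x" "z2 = (s ^^ i2) x" "f z1 = f z2"
          unfolding Ox_def orb_def by auto
        hence "(t ^^ i1) y = (t ^^ i2) y" using fpow by simp
        hence "i1 mod j = i2 mod j" using funpow_eq_iff[OF pt] y(2) by simp
        thus "z1 = z2" using i funpow_eq_iff[OF ps] j_def by simp
      qed
      show "f ` Ox = Oy"
      proof
        show "f ` Ox \<subseteq> Oy" unfolding Ox_def Oy_def orb_def using fpow by auto
        show "Oy \<subseteq> f ` Ox"
        proof
          fix w assume "w \<in> Oy"
          then obtain i where "w = (t ^^ i) y" unfolding Oy_def orb_def by auto
          hence "w = f ((s ^^ i) x)" using fpow by simp
          moreover have "(s ^^ i) x \<in> Ox" unfolding Ox_def orb_def by blast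
          ultimately show "w \<in> f ` Ox" by blast
        qed
      qed
    qed
    have bijA': "bij_betw f A' B'"
    proof -
      have "bij_betw f A' B' = bij_betw f' A' B'"
        by (rule bij_betw_cong) (simp add: f_def A'_def)
      thus ?thesis using f'(1) by simp
    qed
    have "bij_betw f (Ox \<union> A') (Oy \<union> B')"
      by (rule bij_betw_combine[OF bijO bijA']) (auto simp: B'_def)
    moreover have "Ox \<union> A' = A" "Oy \<union> B' = B" using OxA OyB unfolding A'_def B'_def by auto
    ultimately show ?thesis using comm by auto
  qed
qed

lemma finite_odd_subsets: "finite (odd_subsets n)"
proof -
  have "odd_subsets n \<subseteq> Pow {1..n}" unfolding odd_subsets_def by auto
  thus ?thesis by (rule finite_subset) simp
qed

lemma enum_props: "distinct (odd_subsets_enum n) \<and> set (odd_subsets_enum n) = odd_subsets n"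
proof -
  obtain xs where "set xs = odd_subsets n" "distinct xs"
    using finite_distinct_list[OF finite_odd_subsets] by blast
  hence "\<exists>xs. distinct xs \<and> set xs = odd_subsets n" by blast
  thus ?thesis unfolding odd_subsets_enum_def by (rule someI_ex)
qed

lemma odd_subsets_image:
  assumes "\<sigma> permutes {1..n}" "S \<in> odd_subsets n"
  shows "\<sigma> ` S \<in> odd_subsets n"
proof -
  have inj: "inj \<sigma>" using assms(1) permutes_inj by blast
  have "card (\<sigma> ` S) = card S" using inj by (simp add: card_image inj_on_subset)
  moreover have "\<sigma> ` S \<subseteq> {1..n}" using assms permutes_in_image[OF assms(1)] unfolding odd_subsets_def by auto
  ultimately show ?thesis using assms(2) unfolding odd_subsets_def by auto
qed

definition NN :: "nat \<Rightarrow> nat" where "NN n = length (odd_subsets_enum n)"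

lemma rep_carrier: "odd_perm_rep n \<sigma> \<in> carrier_mat (NN n) (NN n)"
  unfolding odd_perm_rep_def NN_def Let_def by simp

lemma rep_dims[simp]: "dim_row (odd_perm_rep n \<sigma>) = NN n" "dim_col (odd_perm_rep n \<sigma>) = NN n"
  unfolding odd_perm_rep_def NN_def Let_def by simp_all

lemma rep_index:
  "i < NN n \<Longrightarrow> j < NN n \<Longrightarrow> odd_perm_rep n \<sigma> $$ (i, j) =
     (if \<sigma> ` (odd_subsets_enum n ! j) = odd_subsets_enum n ! i then 1 else 0)"
  unfolding odd_perm_rep_def NN_def Let_def by simp

lemma rep_mult:
  assumes "\<sigma> permutes {1..n}" "\<tau> permutes {1..n}"
  shows "odd_perm_rep n \<sigma> * odd_perm_rep n \<tau> = odd_perm_rep n (\<sigma> \<circ> \<tau>)"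
proof -
  let ?xs = "odd_subsets_enum n" and ?N = "NN n"
  have d: "distinct ?xs" and st: "set ?xs = odd_subsets n" using enum_props by auto
  show ?thesis
  proof (rule eq_matI)
    fix i j assume "i < dim_row (odd_perm_rep n (\<sigma> \<circ> \<tau>))" "j < dim_col (odd_perm_rep n (\<sigma> \<circ> \<tau>))"
    hence ij: "i < ?N" "j < ?N" by simp_all
    have "\<tau> ` (?xs ! j) \<in> set ?xs" using st odd_subsets_image[OF assms(2)] ij(2) unfolding NN_def
      by (metis nth_mem)
    then obtain l0 where l0: "l0 < ?N" "?xs ! l0 = \<tau> ` (?xs ! j)" unfolding NN_def by (metis in_set_conv_nth)
    have "(odd_perm_rep n \<sigma> * odd_perm_rep n \<tau>) $$ (i, j)
        = (\<Sum>l\<in>{0..<?N}. odd_perm_rep n \<sigma> $$ (i, l) * odd_perm_rep n \<tau> $$ (l, j))"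
      using ij rep_carrier[of n \<sigma>] rep_carrier[of n \<tau>] by (simp add: scalar_prod_def)
    also have "\<dots> = (\<Sum>l\<in>{0..<?N}. if l = l0 then odd_perm_rep n \<sigma> $$ (i, l0) else 0)"
    proof (rule sum.cong[OF refl])
      fix l assume l: "l \<in> {0..<?N}"
      have "(\<tau> ` (?xs ! j) = ?xs ! l) \<longleftrightarrow> l = l0"
        using l0 l d unfolding NN_def by (auto simp: nth_eq_iff_index_eq)
      thus "odd_perm_rep n \<sigma> $$ (i, l) * odd_perm_rep n \<tau> $$ (l, j) = (if l = l0 then odd_perm_rep n \<sigma> $$ (i, l0) else 0)"
        using l ij rep_index by auto
    qed
    also have "\<dots> = odd_perm_rep n \<sigma> $$ (i, l0)" using l0 by simp
    also have "\<dots> = odd_perm_rep n (\<sigma> \<circ> \<tau>) $$ (i, j)"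
      using ij l0 rep_index by (simp add: image_comp)
    finally show "(odd_perm_rep n \<sigma> * odd_perm_rep n \<tau>) $$ (i, j) = odd_perm_rep n (\<sigma> \<circ> \<tau>) $$ (i, j)" .
  next
    show "dim_row (odd_perm_rep n \<sigma> * odd_perm_rep n \<tau>) = dim_row (odd_perm_rep n (\<sigma> \<circ> \<tau>))"
      by simp
    show "dim_col (odd_perm_rep n \<sigma> * odd_perm_rep n \<tau>) = dim_col (odd_perm_rep n (\<sigma> \<circ> \<tau>))"
      by simp
  qed
qed

lemma rep_id: "odd_perm_rep n id = 1\<^sub>m (NN n)"
proof (rule eq_matI)
  have d: "distinct (odd_subsets_enum n)" using enum_props by auto
  fix i j assume "i < dim_row (1\<^sub>m (NN n))" "j < dim_col (1\<^sub>m (NN n) :: complex mat)"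
  hence ij: "i < NN n" "j < NN n" by auto
  show "odd_perm_rep n id $$ (i, j) = 1\<^sub>m (NN n) $$ (i, j)"
    using ij rep_index d unfolding NN_def by (auto simp: nth_eq_iff_index_eq)
qed (use rep_carrier in auto)

lemma rep_pow:
  assumes "\<sigma> permutes {1..n}"
  shows "odd_perm_rep n \<sigma> ^\<^sub>m k = odd_perm_rep n (\<sigma> ^^ k)"
proof (induction k)
  case 0
  have "dim_row (odd_perm_rep n \<sigma>) = NN n" using rep_carrier by auto
  then show ?case using rep_id[unfolded id_def] by simp
next
  case (Suc k)
  have "odd_perm_rep n \<sigma> ^\<^sub>m Suc k = odd_perm_rep n (\<sigma> ^^ k) * odd_perm_rep n \<sigma>" using Suc by simp
  also have "\<dots> = odd_perm_rep n ((\<sigma> ^^ k) \<circ> \<sigma>)"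
    by (rule rep_mult[OF permutes_funpow[OF assms] assms])
  also have "(\<sigma> ^^ k) \<circ> \<sigma> = \<sigma> ^^ Suc k" by (rule funpow_Suc_right[symmetric])
  finally show ?case .
qed

definition tr :: "complex mat \<Rightarrow> complex" where
  "tr M = (\<Sum>i<dim_row M. M $$ (i, i))"

lemma tr_comm:
  assumes "X \<in> carrier_mat m m" "Y \<in> carrier_mat m m"
  shows "tr (X * Y) = tr (Y * X)"
proof -
  have "tr (X * Y) = (\<Sum>i<m. \<Sum>l\<in>{0..<m}. X $$ (i, l) * Y $$ (l, i))"
    unfolding tr_def using assms by (simp add: scalar_prod_def)
  also have "\<dots> = (\<Sum>l\<in>{0..<m}. \<Sum>i<m. Y $$ (l, i) * X $$ (i, l))"
    by (subst sum.swap) (simp add: mult.commute)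
  also have "\<dots> = tr (Y * X)"
    unfolding tr_def using assms by (simp add: scalar_prod_def lessThan_atLeast0)
  finally show ?thesis .
qed

lemma tr_similar:
  assumes "similar_mat A B"
  shows "tr A = tr B"
proof -
  obtain m P Q where *: "{A, B, P, Q} \<subseteq> carrier_mat m m" "P * Q = 1\<^sub>m m" "Q * P = 1\<^sub>m m" "A = P * B * Q"
    using similar_matD[OF assms] by blast
  have c: "A \<in> carrier_mat m m" "B \<in> carrier_mat m m" "P \<in> carrier_mat m m" "Q \<in> carrier_mat m m" using *(1) by auto
  have "tr A = tr (P * (B * Q))" using *(4) c by (simp add: assoc_mult_mat)
  also have "\<dots> = tr ((B * Q) * P)" by (rule tr_comm[OF c(3)]) (use c in auto)
  also have "(B * Q) * P = B * (Q * P)" using c by (simp add: assoc_mult_mat)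
  also have "\<dots> = B" using *(3) c by simp
  finally show ?thesis .
qed

lemma tr_rep:
  "tr (odd_perm_rep n \<sigma>) = of_nat (card {S \<in> odd_subsets n. \<sigma> ` S = S})"
proof -
  let ?xs = "odd_subsets_enum n"
  have d: "distinct ?xs" and st: "set ?xs = odd_subsets n" using enum_props by auto
  have "tr (odd_perm_rep n \<sigma>) = (\<Sum>i<NN n. (\<lambda>S. if \<sigma> ` S = S then 1 else 0) (?xs ! i))"
    unfolding tr_def using rep_carrier[of n \<sigma>] rep_index by simp
  also have "\<dots> = (\<Sum>S\<in>(nth ?xs) ` {..<NN n}. if \<sigma> ` S = S then 1 else 0)"
    by (rule sum.reindex[symmetric, unfolded comp_def]) (use d in \<open>auto simp: inj_on_def nth_eq_iff_index_eq NN_def\<close>)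
  also have "(nth ?xs) ` {..<NN n} = odd_subsets n" unfolding NN_def st[symmetric]
    by (metis map_nth set_map set_upt lessThan_atLeast0)
  also have "(\<Sum>S\<in>odd_subsets n. if \<sigma> ` S = S then 1 else (0::complex)) = of_nat (card {S \<in> odd_subsets n. \<sigma> ` S = S})"
    using sum.inter_filter[OF finite_odd_subsets, where g="\<lambda>_. (1::complex)" and P="\<lambda>S. \<sigma> ` S = S"] by simp
  finally show ?thesis .
qed

lemma fixed_count_eq:
  assumes "s permutes {1..n}" "t permutes {1..n}" "similar_mat (odd_perm_rep n s) (odd_perm_rep n t)"
  shows "card {S \<in> odd_subsets n. (s ^^ k) ` S = S} = card {S \<in> odd_subsets n. (t ^^ k) ` S = S}"
proof -
  obtain P Q where "similar_mat_wit (odd_perm_rep n s) (odd_perm_rep n t) P Q"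
    using assms(3) unfolding similar_mat_def by blast
  hence "similar_mat (odd_perm_rep n s ^\<^sub>m k) (odd_perm_rep n t ^\<^sub>m k)"
    unfolding similar_mat_def using similar_mat_wit_pow by blast
  hence "tr (odd_perm_rep n (s ^^ k)) = tr (odd_perm_rep n (t ^^ k))"
    using tr_similar rep_pow[OF assms(1)] rep_pow[OF assms(2)] by metis
  thus ?thesis unfolding tr_rep by simp
qed

lemma two_adic:
  fixes p :: nat
  assumes "p > 0"
  shows "\<exists>i. 2 ^ i dvd p \<and> odd (p div 2 ^ i)"
  using assms
proof (induction p rule: less_induct)
  case (less p)
  show ?case
  proof (cases "odd p")
    case True then show ?thesis by (intro exI[of _ 0]) simp
  next
    case False
    then obtain q where q: "p = 2 * q" by blast
    hence "q < p" "q > 0" using less.prems by auto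
    then obtain i where "2 ^ i dvd q" "odd (q div 2 ^ i)" using less.IH by blast
    hence "2 ^ Suc i dvd p" "odd (p div 2 ^ Suc i)" using q by auto
    thus ?thesis by blast
  qed
qed

lemma odd_div_gcd:
  fixes w k :: nat
  assumes "odd w"
  shows "odd (w div gcd w k)"
proof -
  have "w div gcd w k dvd w" by (metis dvd_def dvd_div_mult_self gcd_dvd1 mult.commute)
  thus ?thesis using assms by (meson dvd_trans)
qed

lemma Fc_nonzero_iff:
  assumes "\<sigma> permutes A" "finite A"
  shows "Fc \<sigma> A \<noteq> 0 \<longleftrightarrow> (\<exists>x\<in>A. odd (least_power \<sigma> x))"
  using Fc_zero[OF assms] Fc_odd[OF assms] by (metis mult_0_right power_not_zero zero_neq_numeral)

lemma odd_sets_eq: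
  "{S \<in> odd_subsets n. \<sigma> ` S = S} = {S \<in> inv_sets \<sigma> {1..n}. odd (card S)}"
  unfolding odd_subsets_def inv_sets_def by auto

lemma lp_pow_recip:
  assumes "permutation s"
  shows "1 / real (least_power (s ^^ k) x) = real (gcd (least_power s x) k) / real (least_power s x)"
proof -
  let ?p = "least_power s x"
  have "gcd ?p k dvd ?p" by simp
  hence "real (?p div gcd ?p k) = real ?p / real (gcd ?p k)" by (simp add: real_of_nat_div)
  moreover have "gcd ?p k > 0" using lp_pos[OF assms] by simp
  moreover have "?p > 0" using lp_pos[OF assms] by simp
  ultimately show ?thesis unfolding lp_pow[OF assms] by simp
qed

lemma scaled_gcd:
  fixes P k' :: nat and a :: nat
  assumes "2 ^ a dvd P" "P > 0"
  shows "real (gcd P (2 ^ a * k')) / real P = real (gcd (P div 2 ^ a) k') / real (P div 2 ^ a)"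
proof -
  obtain w where w: "P = 2 ^ a * w" using assms(1) by blast
  have "gcd P (2 ^ a * k') = 2 ^ a * gcd w k'" unfolding w by (simp add: gcd_mult_distrib_nat)
  moreover have "P div 2 ^ a = w" using w by simp
  ultimately show ?thesis using w by simp
qed

lemma main_counts:
  fixes n :: nat and s t :: "nat \<Rightarrow> nat"
  assumes n: "n \<ge> 1" and s: "s permutes {1..n}" and t: "t permutes {1..n}"
    and F: "\<And>k. Fc (s ^^ k) {1..n} = Fc (t ^^ k) {1..n}"
  shows "card {x\<in>{1..n}. least_power s x = j} = card {x\<in>{1..n}. least_power t x = j}"
proof -
  let ?A = "{1..n}"
  have fin: "finite ?A" by simp
  have ps: "permutation s" using s fin permutation_permutes by blast
  have pt: "permutation t" using t fin permutation_permutes by blast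
  have sk: "(s ^^ k) permutes ?A" for k using permutes_funpow[OF s] .
  have tk: "(t ^^ k) permutes ?A" for k using permutes_funpow[OF t] .
  have Fs: "Fc (s ^^ k) ?A \<noteq> 0 \<longleftrightarrow> (\<exists>x\<in>?A. odd (least_power s x div gcd (least_power s x) k))" for k
    using Fc_nonzero_iff[OF sk fin] lp_pow[OF ps] by simp
  have Ft: "Fc (t ^^ k) ?A \<noteq> 0 \<longleftrightarrow> (\<exists>x\<in>?A. odd (least_power t x div gcd (least_power t x) k))" for k
    using Fc_nonzero_iff[OF tk fin] lp_pow[OF pt] by simp
  define a where "a = (LEAST i. Fc (s ^^ (2 ^ i)) ?A \<noteq> 0)"
  have ex: "\<exists>i. Fc (s ^^ (2 ^ i)) ?A \<noteq> 0"
  proof -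
    have 1: "1 \<in> ?A" using n by simp
    obtain i where i: "2 ^ i dvd least_power s 1" "odd (least_power s 1 div 2 ^ i)"
      using two_adic[OF lp_pos[OF ps]] by blast
    have "gcd (least_power s 1) (2 ^ i) = 2 ^ i" using i(1) by (simp add: gcd_nat.absorb2)
    hence "odd (least_power s 1 div gcd (least_power s 1) (2 ^ i))" using i(2) by simp
    hence "\<exists>x\<in>?A. odd (least_power s x div gcd (least_power s x) (2 ^ i))" using 1 by blast
    hence "Fc (s ^^ (2 ^ i)) ?A \<noteq> 0" using Fs by blast
    thus ?thesis by blast
  qed
  have aF: "Fc (s ^^ (2 ^ a)) ?A \<noteq> 0" unfolding a_def using LeastI_ex[OF ex] .
  have amin: "Fc (s ^^ (2 ^ i)) ?A = 0" if "i < a" for i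
    using not_less_Least[of i "\<lambda>i. Fc (s ^^ (2 ^ i)) ?A \<noteq> 0"] that unfolding a_def by blast
  have divs: "2 ^ a dvd least_power s x" if "x \<in> ?A" for x
  proof (rule ccontr)
    assume nd: "\<not> 2 ^ a dvd least_power s x"
    obtain i where i: "2 ^ i dvd least_power s x" "odd (least_power s x div 2 ^ i)"
      using two_adic[OF lp_pos[OF ps]] by blast
    have "i < a"
    proof (rule ccontr)
      assume "\<not> i < a"
      hence "2 ^ a dvd (2 ^ i :: nat)" by (simp add: le_imp_power_dvd)
      thus False using nd i(1) dvd_trans by blast
    qed
    have "gcd (least_power s x) (2 ^ i) = 2 ^ i" using i(1) by (simp add: gcd_nat.absorb2)
    hence "odd (least_power s x div gcd (least_power s x) (2 ^ i))" using i(2) by simp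
    hence "\<exists>x\<in>?A. odd (least_power s x div gcd (least_power s x) (2 ^ i))" using that by blast
    hence "Fc (s ^^ (2 ^ i)) ?A \<noteq> 0" using Fs by blast
    thus False using amin[OF \<open>i < a\<close>] by simp
  qed
  have divt: "2 ^ a dvd least_power t x" if "x \<in> ?A" for x
  proof (rule ccontr)
    assume nd: "\<not> 2 ^ a dvd least_power t x"
    obtain i where i: "2 ^ i dvd least_power t x" "odd (least_power t x div 2 ^ i)"
      using two_adic[OF lp_pos[OF pt]] by blast
    have "i < a"
    proof (rule ccontr)
      assume "\<not> i < a"
      hence "2 ^ a dvd (2 ^ i :: nat)" by (simp add: le_imp_power_dvd)
      thus False using nd i(1) dvd_trans by blast
    qed
    have "gcd (least_power t x) (2 ^ i) = 2 ^ i" using i(1) by (simp add: gcd_nat.absorb2)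
    hence "odd (least_power t x div gcd (least_power t x) (2 ^ i))" using i(2) by simp
    hence "\<exists>x\<in>?A. odd (least_power t x div gcd (least_power t x) (2 ^ i))" using that by blast
    hence "Fc (t ^^ (2 ^ i)) ?A \<noteq> 0" using Ft by blast
    thus False using amin[OF \<open>i < a\<close>] F by simp
  qed
  have nz: "Fc (s ^^ (2 ^ a * k')) ?A \<noteq> 0" for k'
  proof -
    obtain x where x: "x \<in> ?A" "odd (least_power s x div gcd (least_power s x) (2 ^ a))"
      using aF Fs by blast
    obtain w where w: "least_power s x = 2 ^ a * w" using divs[OF x(1)] by blast
    have ww: "odd w" using x(2) w by simp
    have "least_power s x div gcd (least_power s x) (2 ^ a * k') = w div gcd w k'"
      unfolding w by (simp add: gcd_mult_distrib_nat[symmetric])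
    hence "odd (least_power s x div gcd (least_power s x) (2 ^ a * k'))" using odd_div_gcd[OF ww] by simp
    thus ?thesis using Fs x(1) by blast
  qed
  define P' where "P' x = least_power s x div 2 ^ a" for x
  define Q' where "Q' x = least_power t x div 2 ^ a" for x
  have G: "Gs P' ?A k' = Gs Q' ?A k'" if "k' > 0" for k'
  proof -
    let ?k = "2 ^ a * k'"
    have "2 * Fc (s ^^ ?k) ?A = 2 ^ card (Orbs (s ^^ ?k) ?A)"
      using nz[of k'] Fc_nonzero_iff[OF sk fin] Fc_odd[OF sk fin] by blast
    moreover have "2 * Fc (t ^^ ?k) ?A = 2 ^ card (Orbs (t ^^ ?k) ?A)"
      using nz[of k'] F Fc_nonzero_iff[OF tk fin] Fc_odd[OF tk fin] by metis
    ultimately have "card (Orbs (s ^^ ?k) ?A) = card (Orbs (t ^^ ?k) ?A)" using F by simp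
    hence "(\<Sum>x\<in>?A. 1 / real (least_power (s ^^ ?k) x)) = (\<Sum>x\<in>?A. 1 / real (least_power (t ^^ ?k) x))"
      using card_Orbs_sum[OF sk fin] card_Orbs_sum[OF tk fin] by metis
    moreover have "(\<Sum>x\<in>?A. 1 / real (least_power (s ^^ ?k) x)) = Gs P' ?A k'"
      unfolding Gs_def P'_def using lp_pow_recip[OF ps] scaled_gcd divs lp_pos[OF ps] by simp
    moreover have "(\<Sum>x\<in>?A. 1 / real (least_power (t ^^ ?k) x)) = Gs Q' ?A k'"
      unfolding Gs_def Q'_def using lp_pow_recip[OF pt] scaled_gcd divt lp_pos[OF pt] by simp
    ultimately show ?thesis by simp
  qed
  have H: "\<forall>d>0. Hs P' ?A d = Hs Q' ?A d" using G_eq_H_eq[OF fin fin] G by blast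
  have P'pos: "\<forall>x\<in>?A. P' x > 0"
  proof
    fix x assume x: "x \<in> ?A"
    have "2 ^ a \<le> least_power s x" using dvd_imp_le[OF divs[OF x] lp_pos[OF ps]] .
    thus "P' x > 0" unfolding P'_def by (simp add: div_greater_zero_iff)
  qed
  have Q'pos: "\<forall>x\<in>?A. Q' x > 0"
  proof
    fix x assume x: "x \<in> ?A"
    have "2 ^ a \<le> least_power t x" using dvd_imp_le[OF divt[OF x] lp_pos[OF pt]] .
    thus "Q' x > 0" unfolding Q'_def by (simp add: div_greater_zero_iff)
  qed
  have cnt': "card {x\<in>?A. P' x = j'} = card {x\<in>?A. Q' x = j'}" for j'
    using H_count[OF fin fin P'pos Q'pos H] .
  show ?thesis
  proof (cases "2 ^ a dvd j")
    case True
    have "{x\<in>?A. least_power s x = j} = {x\<in>?A. P' x = j div 2 ^ a}"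
      unfolding P'_def using divs True by (auto elim!: dvdE)
    moreover have "{x\<in>?A. least_power t x = j} = {x\<in>?A. Q' x = j div 2 ^ a}"
      unfolding Q'_def using divt True by (auto elim!: dvdE)
    ultimately show ?thesis using cnt' by simp
  next
    case False
    hence "{x\<in>?A. least_power s x = j} = {}" "{x\<in>?A. least_power t x = j} = {}"
      using divs divt by auto
    thus ?thesis by (simp only: card.empty)
  qed
qed

theorem theorem3p10:
  fixes n :: nat and s t :: "nat \<Rightarrow> nat"
  assumes "n \<ge> 1"
    and "s permutes {1..n}" and "t permutes {1..n}"
    and "similar_mat (odd_perm_rep n s) (odd_perm_rep n t)"
  shows "\<exists>p. p permutes {1..n} \<and> t = p \<circ> s \<circ> Hilbert_Choice.inv p"
proof -
  let ?A = "{1..n}"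
  have F: "Fc (s ^^ k) ?A = Fc (t ^^ k) ?A" for k
    using fixed_count_eq[OF assms(2,3,4), of k] unfolding odd_sets_eq Fc_def .
  have cnt: "\<forall>j. card {x\<in>?A. least_power s x = j} = card {x\<in>?A. least_power t x = j}"
    using main_counts[OF assms(1,2,3) F] by blast
  obtain f where f: "bij_betw f ?A ?A" "\<forall>x\<in>?A. f (s x) = t (f x)"
    using conj_exists[OF _ _ assms(2,3) cnt] by auto
  define p where "p z = (if z \<in> ?A then f z else z)" for z
  have pb: "bij_betw p ?A ?A"
  proof -
    have "bij_betw p ?A ?A = bij_betw f ?A ?A" by (rule bij_betw_cong) (simp add: p_def)
    thus ?thesis using f(1) by simp
  qed
  have pp: "p permutes ?A" by (rule bij_imp_permutes[OF pb]) (auto simp: p_def)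
  have "t = p \<circ> s \<circ> Hilbert_Choice.inv p"
  proof
    fix z
    define w where "w = Hilbert_Choice.inv p z"
    have pw: "p w = z" unfolding w_def using permutes_inverses(1)[OF pp] by simp
    show "t z = (p \<circ> s \<circ> Hilbert_Choice.inv p) z"
    proof (cases "w \<in> ?A")
      case True
      have "s w \<in> ?A" using permutes_in_image[OF assms(2)] True by simp
      hence "p (s w) = f (s w)" unfolding p_def by simp
      also have "\<dots> = t (f w)" using f(2) True by simp
      also have "f w = z" using pw True unfolding p_def by simp
      finally show ?thesis unfolding w_def by simp
    next
      case False
      have zw: "z = w" using pw False unfolding p_def by auto
      have sw: "s w = w" using permutes_not_in[OF assms(2) False] .
      have tz: "t z = z" using permutes_not_in[OF assms(3)] False zw by simp
      show ?thesis using pw sw tz unfolding w_def by simp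
    qed
  qed
  thus ?thesis using pp by blast
qed

end
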